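(* Let $A\in\mathbb{R}^{D\times k}$ be a nonnegative matrix of full column rank and let $\delta\ge0$. Then $$\lambda_\delta(A)=\max\{\|x\|_\infty-\delta\|x\|_1 \;:\; x\in\mathbb{R}^k,\ \|Ax\|_1\le 1\}.$$ Equivalently, $\lambda_\delta(A)$ equals the optimal value of the program: maximize $\mathrm{tr}(Q)-\delta\sum_{i,j}|Q_{ij}|$ over $Q\in\mathbb{R}^{k\times k}$ subject to $\sum_{i,j}|(QA^\top)_{ij}|\le 1$.
   Context: For a matrix $M$, $\|M\|_{\max}=\max_{i,j}|M_{ij}|$. For $\delta\ge 0$, $\lambda_\delta(A)$ denotes the optimal value of the convex program: minimize $\|B\|_{\max}$ over $B\in\mathbb{R}^{k\times D}$ subject to $\|BA-I_k\|_{\max}\le\delta$. *)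

theory Defs
  imports "HOL-Analysis.Analysis"
begin

definition maxnorm :: "real^'n^'m \<Rightarrow> real" where
  "maxnorm M = Max {\<bar>M $ i $ j\<bar> | i j. True}"

definition entry_l1 :: "real^'n^'m \<Rightarrow> real" where
  "entry_l1 M = (\<Sum>i\<in>UNIV. \<Sum>j\<in>UNIV. \<bar>M $ i $ j\<bar>)"

definition vec_l1 :: "real^'n \<Rightarrow> real" where
  "vec_l1 x = (\<Sum>i\<in>UNIV. \<bar>x $ i\<bar>)"

definition vec_linf :: "real^'n \<Rightarrow> real" where
  "vec_linf x = Max {\<bar>x $ i\<bar> | i. True}"

definition mtrace :: "real^'n^'n \<Rightarrow> real" where
  "mtrace Q = (\<Sum>i\<in>UNIV. Q $ i $ i)"

definition lambda_delta :: "real \<Rightarrow> real^'k^'D \<Rightarrow> real" where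
  "lambda_delta \<delta> A = Inf {maxnorm B | B :: real^'D^'k. maxnorm (B ** A - mat 1) \<le> \<delta>}"

definition is_max_of :: "real \<Rightarrow> real set \<Rightarrow> bool" where
  "is_max_of v S \<longleftrightarrow> v \<in> S \<and> (\<forall>y\<in>S. y \<le> v)"

end

theory Submission imports Defs begin

lemma maxnorm_fin: "finite {\<bar>M $ i $ j\<bar> | i j. True}"
proof -
  have "{\<bar>M $ i $ j\<bar> | i j. True} = (\<lambda>(i,j). \<bar>M $ i $ j\<bar>) ` UNIV" by auto
  thus ?thesis by simp
qed

lemma maxnorm_ge: "\<bar>M $ i $ j\<bar> \<le> maxnorm M"
  unfolding maxnorm_def by (rule Max_ge[OF maxnorm_fin]) auto

lemma maxnorm_le: "(\<forall>i j. \<bar>M $ i $ j\<bar> \<le> c) \<Longrightarrow> maxnorm M \<le> c"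
  unfolding maxnorm_def by (subst Max_le_iff[OF maxnorm_fin]) auto

lemma maxnorm_nonneg: "0 \<le> maxnorm M"
  using maxnorm_ge[of M] abs_ge_zero order_trans by blast

lemma linf_fin: "finite {\<bar>x $ i\<bar> | i. True}"
proof -
  have "{\<bar>x $ i\<bar> | i. True} = (\<lambda>i. \<bar>x $ i\<bar>) ` UNIV" by auto
  thus ?thesis by simp
qed

lemma linf_ge: "\<bar>x $ i\<bar> \<le> vec_linf x"
  unfolding vec_linf_def by (rule Max_ge[OF linf_fin]) auto

lemma linf_attained: "\<exists>i. vec_linf x = \<bar>x $ i\<bar>"
proof -
  have "vec_linf x \<in> {\<bar>x $ i\<bar> | i. True}"
    unfolding vec_linf_def by (rule Max_in[OF linf_fin]) auto
  thus ?thesis by auto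
qed

lemma mv_bound:
  assumes "\<forall>j. \<bar>M $ i $ j\<bar> \<le> c"
  shows "\<bar>(M *v y) $ i\<bar> \<le> c * vec_l1 y"
proof -
  have "\<bar>(M *v y) $ i\<bar> = \<bar>\<Sum>j\<in>UNIV. M $ i $ j * y $ j\<bar>" by (simp add: matrix_vector_mult_def)
  also have "\<dots> \<le> (\<Sum>j\<in>UNIV. \<bar>M $ i $ j\<bar> * \<bar>y $ j\<bar>)" by (rule order_trans[OF sum_abs]) (simp add: abs_mult)
  also have "\<dots> \<le> (\<Sum>j\<in>UNIV. c * \<bar>y $ j\<bar>)" by (rule sum_mono) (simp add: assms mult_right_mono)
  also have "\<dots> = c * vec_l1 y" by (simp add: vec_l1_def sum_distrib_left)
  finally show ?thesis .
qed

lemma weak: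
  assumes "maxnorm (B ** A - mat 1) \<le> \<delta>"
  shows "x $ i - \<delta> * vec_l1 x \<le> maxnorm B * vec_l1 (A *v x)"
proof -
  let ?E = "B ** A - mat 1"
  have "x = (B ** A) *v x - ?E *v x" by (simp add: matrix_vector_mult_diff_rdistrib)
  hence "x $ i = (B *v (A *v x)) $ i - (?E *v x) $ i" by (metis matrix_vector_mul_assoc vector_minus_component)
  moreover have "\<bar>(B *v (A *v x)) $ i\<bar> \<le> maxnorm B * vec_l1 (A *v x)"
    by (rule mv_bound) (simp add: maxnorm_ge)
  moreover have "\<bar>(?E *v x) $ i\<bar> \<le> \<delta> * vec_l1 x"
    by (rule mv_bound) (meson assms maxnorm_ge order_trans)
  ultimately show ?thesis by linarith
qed


lemma mul_sgn: "(y::real) * sgn y = \<bar>y\<bar>"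
  by (cases "y > 0"; cases "y < 0") auto

lemma inner_sgn: "inner y (\<chi> l. c * sgn (y $ l)) = c * vec_l1 (y::real^'n)"
  by (simp add: inner_vec_def vec_l1_def sum_distrib_left mul_sgn[symmetric] algebra_simps)

lemma strong_row:
  fixes A :: "real^'k^'D"
  assumes inj: "inj ((*v) A)" and v0: "0 \<le> v" and d0: "0 \<le> \<delta>"
   and hv: "\<forall>x. vec_l1 (A *v x) \<le> 1 \<longrightarrow> vec_linf x - \<delta> * vec_l1 x \<le> v"
  shows "\<exists>b d. (\<forall>l. \<bar>b$l\<bar> \<le> v) \<and> (\<forall>j. \<bar>d$j\<bar> \<le> \<delta>) \<and> axis i 1 = transpose A *v b + d"
proof (rule ccontr)
  assume nc: "\<not> ?thesis"
  define Bx :: "(real^'D) set" where "Bx = cbox (\<chi> _. -v) (\<chi> _. v)"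
  define Dx :: "(real^'k) set" where "Dx = cbox (\<chi> _. -\<delta>) (\<chi> _. \<delta>)"
  define f where "f = (\<lambda>p::(real^'D) \<times> (real^'k). transpose A *v fst p + snd p)"
  define C where "C = f ` (Bx \<times> Dx)"
  have inB: "b \<in> Bx \<longleftrightarrow> (\<forall>l. \<bar>b$l\<bar> \<le> v)" for b
    unfolding Bx_def mem_box_cart by (auto simp: abs_le_iff) (metis minus_le_iff)+
  have inD: "d \<in> Dx \<longleftrightarrow> (\<forall>l. \<bar>d$l\<bar> \<le> \<delta>)" for d
    unfolding Dx_def mem_box_cart by (auto simp: abs_le_iff) (metis minus_le_iff)+
  have lin: "linear f"
    unfolding f_def by (rule linearI) (auto simp: matrix_vector_right_distrib matrix_vector_mult_scaleR algebra_simps)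
  have conv: "convex C"
    unfolding C_def by (rule convex_linear_image[OF lin]) (simp add: Bx_def Dx_def convex_Times)
  have "compact C"
    unfolding C_def
    by (rule compact_continuous_image)
      (auto intro!: linear_continuous_on simp: linear_conv_bounded_linear[symmetric] lin Bx_def Dx_def compact_Times)
  hence cl: "closed C" by (rule compact_imp_closed)
  have nin: "axis i 1 \<notin> C"
    using nc unfolding C_def f_def by (force simp: inB inD)
  obtain a c where ac: "inner a (axis i 1) < c" "\<forall>z\<in>C. inner a z > c"
    using separating_hyperplane_closed_point[OF conv cl nin] by blast
  define x where "x = - a"
  define b0 :: "real^'D" where "b0 = (\<chi> l. v * sgn ((A *v x) $ l))"
  define e0 :: "real^'k" where "e0 = (\<chi> l. \<delta> * sgn (x $ l))"
  have "b0 \<in> Bx" unfolding inB b0_def using v0 by (auto simp: abs_mult abs_sgn_eq)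
  moreover have "e0 \<in> Dx" unfolding inD e0_def using d0 by (auto simp: abs_mult abs_sgn_eq)
  ultimately have "f (b0, e0) \<in> C" unfolding C_def by auto
  with ac have "inner x (f (b0, e0)) < x $ i"
    unfolding x_def by (auto simp: inner_axis)
  moreover have "inner x (f (b0, e0)) = v * vec_l1 (A *v x) + \<delta> * vec_l1 x"
  proof -
    have "inner x (transpose A *v b0) = inner (A *v x) b0"
      by (metis dot_lmul_matrix vector_transpose_matrix)
    thus ?thesis unfolding f_def using inner_sgn[of "A *v x" v] inner_sgn[of x \<delta>]
      by (simp add: inner_add_right b0_def e0_def inner_commute)
  qed
  ultimately have key: "v * vec_l1 (A *v x) + \<delta> * vec_l1 x < x $ i" by simp
  define t where "t = vec_l1 (A *v x)"
  have t0: "t \<ge> 0" unfolding t_def vec_l1_def by (simp add: sum_nonneg)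
  show False
  proof (cases "t = 0")
    case True
    hence "A *v x = 0" unfolding t_def vec_l1_def
      by (subst (asm) sum_nonneg_eq_0_iff) (auto simp: vec_eq_iff)
    hence "x = 0" using inj by (metis injD matrix_vector_mult_0_right)
    with key d0 show False by (simp add: vec_l1_def)
  next
    case False
    with t0 have tp: "t > 0" by simp
    define y where "y = (1/t) *\<^sub>R x"
    have "A *v y = (1/t) *\<^sub>R (A *v x)" unfolding y_def by (simp add: matrix_vector_mult_scaleR)
    hence "vec_l1 (A *v y) = (1/t) * t" using tp unfolding t_def vec_l1_def
      by (simp add: abs_mult sum_distrib_left)
    hence "vec_l1 (A *v y) \<le> 1" using tp by simp
    with hv have h1: "vec_linf y - \<delta> * vec_l1 y \<le> v" by blast
    have ly: "vec_l1 y = vec_l1 x / t" using tp unfolding y_def vec_l1_def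
      by (simp add: abs_mult sum_divide_distrib)
    have "y $ i \<le> vec_linf y" using linf_ge[of y i] by linarith
    hence "x $ i / t - \<delta> * (vec_l1 x / t) \<le> v" using h1 ly unfolding y_def by simp
    hence "x $ i - \<delta> * vec_l1 x \<le> v * t" using tp by (simp add: field_simps)
    with key show False unfolding t_def by (simp add: algebra_simps)
  qed
qed


lemma l1_nonneg: "0 \<le> vec_l1 x" unfolding vec_l1_def by (simp add: sum_nonneg)

lemma weak_abs:
  assumes "maxnorm (B ** A - mat 1) \<le> \<delta>"
  shows "\<bar>x $ i\<bar> - \<delta> * vec_l1 x \<le> maxnorm B * vec_l1 (A *v x)"
proof (cases "x $ i \<ge> 0")
  case True thus ?thesis using weak[OF assms, of x i] by simp
next
  case False
  have "(-x) $ i - \<delta> * vec_l1 (-x) \<le> maxnorm B * vec_l1 (A *v (-x))" by (rule weak[OF assms])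
  moreover have "vec_l1 (-x) = vec_l1 x" "A *v (-x) = - (A *v x)" "vec_l1 (- (A *v x)) = vec_l1 (A *v x)"
    by (auto simp: vec_l1_def matrix_vector_mult_def vec_eq_iff sum_negf)
  ultimately show ?thesis using False by simp
qed

lemma weak_linf:
  assumes "maxnorm (B ** A - mat 1) \<le> \<delta>" "vec_l1 (A *v x) \<le> 1"
  shows "vec_linf x - \<delta> * vec_l1 x \<le> maxnorm B"
proof -
  obtain i where "vec_linf x = \<bar>x $ i\<bar>" using linf_attained by blast
  moreover have "maxnorm B * vec_l1 (A *v x) \<le> maxnorm B"
    using assms(2) maxnorm_nonneg[of B] by (simp add: mult_left_le)
  ultimately show ?thesis using weak_abs[OF assms(1), of x i] by simp
qed

lemma QA_row: "((Q::real^_^_) ** transpose A) $ i = A *v (Q $ i)"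
  by (simp add: vec_eq_iff matrix_matrix_mult_def matrix_vector_mult_def transpose_def mult.commute)

lemma weak_Q:
  assumes "maxnorm (B ** A - mat 1) \<le> \<delta>" "entry_l1 (Q ** transpose A) \<le> 1"
  shows "mtrace Q - \<delta> * entry_l1 Q \<le> maxnorm B"
proof -
  have "mtrace Q - \<delta> * entry_l1 Q = (\<Sum>i\<in>UNIV. Q $ i $ i - \<delta> * vec_l1 (Q $ i))"
    by (simp add: mtrace_def entry_l1_def vec_l1_def sum_subtractf sum_distrib_left)
  also have "\<dots> \<le> (\<Sum>i\<in>UNIV. maxnorm B * vec_l1 (A *v (Q $ i)))"
    by (rule sum_mono) (rule weak[OF assms(1)])
  also have "\<dots> = maxnorm B * entry_l1 (Q ** transpose A)"
    by (simp add: entry_l1_def vec_l1_def QA_row sum_distrib_left)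
  also have "\<dots> \<le> maxnorm B" using assms(2) maxnorm_nonneg[of B] by (simp add: mult_left_le)
  finally show ?thesis .
qed

lemma cont_l1: "continuous_on UNIV (\<lambda>x. vec_l1 (M *v x))"
  unfolding vec_l1_def matrix_vector_mult_def
  by (auto intro!: continuous_intros)

lemma cont_l1': "continuous_on UNIV (\<lambda>x::real^'n. vec_l1 x)"
  unfolding vec_l1_def
  by (auto intro!: continuous_intros)


theorem mainTheorem2:
  fixes A :: "real^'k^'D" and \<delta> :: real
  assumes nonneg: "\<forall>i j. A $ i $ j \<ge> 0"
    and fullrank: "rank A = CARD('k)"
    and delta: "\<delta> \<ge> 0"
  shows "is_max_of (lambda_delta \<delta> A)
           {vec_linf x - \<delta> * vec_l1 x | x :: real^'k. vec_l1 (A *v x) \<le> 1}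
       \<and> is_max_of (lambda_delta \<delta> A)
           {mtrace Q - \<delta> * entry_l1 Q | Q :: real^'k^'k. entry_l1 (Q ** transpose A) \<le> 1}"
proof -
  have inj: "inj ((*v) A)" using fullrank full_rank_injective by blast
  then obtain L :: "real^'D^'k" where L: "L ** A = mat 1"
    using matrix_left_invertible_injective by blast
  define F where "F = {maxnorm B | B :: real^'D^'k. maxnorm (B ** A - mat 1) \<le> \<delta>}"
  have lam: "lambda_delta \<delta> A = Inf F" unfolding lambda_delta_def F_def by simp
  have "maxnorm (0::real^'k^'k) \<le> 0" by (rule maxnorm_le) simp
  hence "maxnorm (L ** A - mat 1) \<le> \<delta>" using L delta by simp
  hence Fne: "F \<noteq> {}" unfolding F_def by blast
  have Fbdd: "bdd_below F" unfolding F_def bdd_below_def using maxnorm_nonneg by blast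
  define K where "K = {x::real^'k. vec_l1 (A *v x) \<le> 1}"
  have "closed K" unfolding K_def by (rule closed_Collect_le[OF cont_l1]) simp
  moreover have "bounded K"
  proof -
    have "bounded_linear ((*v) L)" by (simp add: linear_conv_bounded_linear[symmetric] matrix_vector_mul_linear)
    then obtain c where c: "\<And>y. norm (L *v y) \<le> norm y * c" using bounded_linear.bounded by blast
    have "norm x \<le> \<bar>c\<bar>" if "x \<in> K" for x
    proof -
      have "x = L *v (A *v x)" by (simp add: matrix_vector_mul_assoc L)
      hence "norm x \<le> norm (A *v x) * c" using c by metis
      also have "\<dots> \<le> norm (A *v x) * \<bar>c\<bar>" by (simp add: mult_left_mono)
      also have "\<dots> \<le> 1 * \<bar>c\<bar>"
        using that norm_le_l1_cart[of "A *v x"] unfolding K_def vec_l1_def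
        by (intro mult_right_mono) auto
      finally show ?thesis by simp
    qed
    thus ?thesis unfolding bounded_iff by blast
  qed
  ultimately have cK: "compact K" by (simp add: compact_eq_bounded_closed)
  have zK: "0 \<in> K" unfolding K_def by (simp add: vec_l1_def)
  define h where "h = (\<lambda>i (x::real^'k). \<bar>x $ i\<bar> - \<delta> * vec_l1 x)"
  have "\<forall>i. \<exists>x\<in>K. \<forall>y\<in>K. h i y \<le> h i x"
  proof
    fix i
    have "continuous_on K (h i)" unfolding h_def
      by (intro continuous_intros continuous_on_subset[OF cont_l1'] ) auto
    thus "\<exists>x\<in>K. \<forall>y\<in>K. h i y \<le> h i x" using continuous_attains_sup[OF cK] zK by blast
  qed
  then obtain xs where xs: "\<And>i. xs i \<in> K" "\<And>i y. y \<in> K \<Longrightarrow> h i y \<le> h i (xs i)"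
    by metis
  define Mx where "Mx = Max (range (\<lambda>i. h i (xs i)))"
  have "Mx \<in> range (\<lambda>i. h i (xs i))" unfolding Mx_def by (rule Max_in) auto
  then obtain i0 where i0: "Mx = h i0 (xs i0)" by blast
  define x0 where "x0 = xs i0"
  define m where "m = vec_linf x0 - \<delta> * vec_l1 x0"
  have x0K: "x0 \<in> K" unfolding x0_def by (rule xs)
  have hK: "vec_linf x - \<delta> * vec_l1 x \<le> m" if "x \<in> K" for x
  proof -
    obtain j where j: "vec_linf x = \<bar>x $ j\<bar>" using linf_attained by blast
    have "vec_linf x - \<delta> * vec_l1 x = h j x" unfolding h_def j ..
    also have "\<dots> \<le> h j (xs j)" using xs(2) that by blast
    also have "\<dots> \<le> Mx" unfolding Mx_def by (rule Max_ge) auto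
    also have "\<dots> \<le> m" unfolding i0 m_def h_def x0_def using linf_ge[of "xs i0" i0] by simp
    finally show ?thesis .
  qed
  have m0: "0 \<le> m"
  proof -
    obtain j where "vec_linf (0::real^'k) = \<bar>(0::real^'k) $ j\<bar>" using linf_attained by blast
    hence "vec_linf (0::real^'k) - \<delta> * vec_l1 (0::real^'k) = 0" by (simp add: vec_l1_def)
    thus ?thesis using hK[OF zK] by simp
  qed
  have "\<forall>i. \<exists>bd. (\<forall>l. \<bar>fst bd $ l\<bar> \<le> m) \<and> (\<forall>j. \<bar>snd bd $ j\<bar> \<le> \<delta>)
          \<and> axis i 1 = transpose A *v fst bd + snd bd"
  proof
    fix i
    have "\<forall>x. vec_l1 (A *v x) \<le> 1 \<longrightarrow> vec_linf x - \<delta> * vec_l1 x \<le> m"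
      using hK unfolding K_def by blast
    from strong_row[OF inj m0 delta this, of i] show "\<exists>bd. (\<forall>l. \<bar>fst bd $ l\<bar> \<le> m) \<and> (\<forall>j. \<bar>snd bd $ j\<bar> \<le> \<delta>)
          \<and> axis i 1 = transpose A *v fst bd + snd bd" by auto
  qed
  then obtain bd where bd: "\<And>i l. \<bar>fst (bd i) $ l\<bar> \<le> m" "\<And>i j. \<bar>snd (bd i) $ j\<bar> \<le> \<delta>"
    "\<And>i. axis i 1 = transpose A *v fst (bd i) + snd (bd i)" by metis
  define B :: "real^'D^'k" where "B = (\<chi> i. fst (bd i))"
  have "maxnorm (B ** A - mat 1) \<le> \<delta>"
  proof (rule maxnorm_le, intro allI)
    fix i j
    have "(B ** A) $ i $ j = (transpose A *v fst (bd i)) $ j"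
      by (simp add: B_def matrix_matrix_mult_def matrix_vector_mult_def transpose_def mult.commute)
    moreover have "(mat 1 :: real^'k^'k) $ i $ j = axis i 1 $ j" by (simp add: mat_def axis_def)
    ultimately have "(B ** A - mat 1) $ i $ j = - snd (bd i) $ j"
      using bd(3)[of i] by (simp add: vec_eq_iff)
    thus "\<bar>(B ** A - mat 1) $ i $ j\<bar> \<le> \<delta>" using bd(2) by simp
  qed
  moreover have "maxnorm B \<le> m" by (rule maxnorm_le) (simp add: B_def bd(1))
  ultimately have "Inf F \<le> m"
  proof -
    assume a: "maxnorm (B ** A - mat 1) \<le> \<delta>" "maxnorm B \<le> m"
    hence "maxnorm B \<in> F" unfolding F_def by blast
    from cInf_lower[OF this Fbdd] a(2) show ?thesis by simp
  qed
  moreover have "m \<le> Inf F"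
    by (rule cInf_greatest[OF Fne]) (use x0K weak_linf in \<open>auto simp: F_def K_def m_def\<close>)
  ultimately have lm: "lambda_delta \<delta> A = m" using lam by simp
  have P1: "is_max_of (lambda_delta \<delta> A)
           {vec_linf x - \<delta> * vec_l1 x | x :: real^'k. vec_l1 (A *v x) \<le> 1}"
    unfolding is_max_of_def lm using x0K hK unfolding K_def m_def by blast
  obtain j where j: "vec_linf x0 = \<bar>x0 $ j\<bar>" using linf_attained by blast
  define s :: real where "s = (if x0 $ j \<ge> 0 then 1 else -1)"
  have s: "\<bar>s\<bar> = 1" "s * x0 $ j = \<bar>x0 $ j\<bar>" by (auto simp: s_def)
  define Q :: "real^'k^'k" where "Q = (\<chi> i l. if i = j then s * x0 $ l else 0)"
  have "mtrace Q = \<bar>x0 $ j\<bar>" unfolding mtrace_def Q_def using s by (simp add: if_distrib cong: if_cong)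
  moreover have "entry_l1 Q = vec_l1 x0"
  proof -
    have "entry_l1 Q = (\<Sum>i\<in>UNIV. if i = j then vec_l1 x0 else 0)"
      unfolding entry_l1_def vec_l1_def Q_def using s by (intro sum.cong) (auto simp: abs_mult)
    thus ?thesis by simp
  qed
  moreover have "entry_l1 (Q ** transpose A) \<le> 1"
  proof -
    have Qi: "Q $ i = (if i = j then s *\<^sub>R x0 else 0)" for i by (simp add: Q_def vec_eq_iff)
    have "(Q ** transpose A) $ i = (if i = j then s *\<^sub>R (A *v x0) else 0)" for i
      unfolding QA_row Qi by (simp add: matrix_vector_mult_scaleR)
    hence "entry_l1 (Q ** transpose A) = (\<Sum>i\<in>UNIV. if i = j then vec_l1 (A *v x0) else 0)"
      unfolding entry_l1_def vec_l1_def using s by (intro sum.cong) (auto simp: abs_mult)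
    hence "entry_l1 (Q ** transpose A) = vec_l1 (A *v x0)" by simp
    thus ?thesis using x0K K_def by simp
  qed
  ultimately have "m \<in> {mtrace Q - \<delta> * entry_l1 Q | Q :: real^'k^'k. entry_l1 (Q ** transpose A) \<le> 1}"
    unfolding m_def j by (metis (mono_tags, lifting) mem_Collect_eq)
  moreover have "y \<le> m" if "y \<in> {mtrace Q - \<delta> * entry_l1 Q | Q :: real^'k^'k. entry_l1 (Q ** transpose A) \<le> 1}" for y
  proof -
    from that obtain Q' :: "real^'k^'k" where "y = mtrace Q' - \<delta> * entry_l1 Q'" "entry_l1 (Q' ** transpose A) \<le> 1" by blast
    hence "y \<le> Inf F" by (intro cInf_greatest[OF Fne]) (auto simp: F_def intro: weak_Q)
    thus ?thesis using lam lm by simp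
  qed
  ultimately have P2: "is_max_of (lambda_delta \<delta> A)
           {mtrace Q - \<delta> * entry_l1 Q | Q :: real^'k^'k. entry_l1 (Q ** transpose A) \<le> 1}"
    unfolding is_max_of_def lm by blast
  from P1 P2 show ?thesis ..
qed

end
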